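(* Let $\mathcal{F}$ be a $\kappa$-complete filter over $\kappa$ which extends the club filter $\mathcal{D}_\kappa$. If $\mathrm{Gal}(\mathcal{F},\kappa^+,\kappa^{++})$ holds, then $\neg_{\mathrm{st}}\mathrm{Gal}(\mathcal{D}_{\kappa^+},\kappa^+,\kappa^{++})$ fails. In particular, $\mathrm{Gal}(\mathcal{F},\kappa^+,\kappa^+)$ entails the failure of $\neg_{\mathrm{st}}\mathrm{Gal}(\mathcal{D}_{\kappa^+},\kappa^+,\kappa^{++})$.
   Context: $\mathcal{D}_\theta$ is the club filter on $\theta$. $\mathrm{Gal}(\mathcal{F},\mu,\lambda)$: for every $\mathcal{C}\subseteq\mathcal{F}$ with $|\mathcal{C}|=\lambda$ there is $\mathcal{E}\subseteq\mathcal{C}$ with $|\mathcal{E}|=\mu$ and $\bigcap\mathcal{E}\in\mathcal{F}$. $\neg_{\mathrm{st}}\mathrm{Gal}(\mathcal{D}_{\kappa^+},\mu,\lambda)$: there is $\mathcal{C}\subseteq\mathcal{D}_{\kappa^+}$ with $|\mathcal{C}|=\lambda$ such that for every $\mathcal{E}\subseteq\mathcal{C}$ with $|\mathcal{E}|=\mu$, $|\bigcap\mathcal{E}|<\kappa$. *)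

theory Defs
  imports Main
begin

text \<open>Cardinals are represented by cardinal orders (well-orders) as in the
BNF cardinal library of Main; the cardinal kappa is a relation r with
Card_order r, kappa^+ is cardSuc r, kappa^++ is cardSuc (cardSuc r).\<close>

definition is_lub :: "'a rel \<Rightarrow> 'a set \<Rightarrow> 'a \<Rightarrow> bool" where
  "is_lub w B a \<longleftrightarrow> a \<in> Field w \<and> (\<forall>b\<in>B. (b, a) \<in> w) \<and>
     (\<forall>a'\<in>Field w. (\<forall>b\<in>B. (b, a') \<in> w) \<longrightarrow> (a, a') \<in> w)"

definition closed_in_wo :: "'a rel \<Rightarrow> 'a set \<Rightarrow> bool" where
  "closed_in_wo w C \<longleftrightarrow> (\<forall>B a. B \<subseteq> C \<and> B \<noteq> {} \<and> is_lub w B a \<longrightarrow> a \<in> C)"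

definition unbounded_in_wo :: "'a rel \<Rightarrow> 'a set \<Rightarrow> bool" where
  "unbounded_in_wo w C \<longleftrightarrow> (\<forall>a\<in>Field w. \<exists>c\<in>C. (a, c) \<in> w \<and> a \<noteq> c)"

definition club :: "'a rel \<Rightarrow> 'a set \<Rightarrow> bool" where
  "club w C \<longleftrightarrow> C \<subseteq> Field w \<and> closed_in_wo w C \<and> unbounded_in_wo w C"

definition club_filter :: "'a rel \<Rightarrow> 'a set set" where
  "club_filter w = {X. X \<subseteq> Field w \<and> (\<exists>C. club w C \<and> C \<subseteq> X)}"

definition filter_over :: "'a set \<Rightarrow> 'a set set \<Rightarrow> bool" where
  "filter_over S F \<longleftrightarrow> (\<forall>X\<in>F. X \<subseteq> S) \<and> S \<in> F \<and> {} \<notin> F \<and>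
     (\<forall>X Y. X \<in> F \<and> X \<subseteq> Y \<and> Y \<subseteq> S \<longrightarrow> Y \<in> F) \<and>
     (\<forall>X Y. X \<in> F \<and> Y \<in> F \<longrightarrow> X \<inter> Y \<in> F)"

definition complete_filter :: "'b rel \<Rightarrow> 'a set set \<Rightarrow> bool" where
  "complete_filter kappa F \<longleftrightarrow>
     (\<forall>E. E \<subseteq> F \<and> E \<noteq> {} \<and> (card_of E, kappa) \<in> ordLess \<longrightarrow> \<Inter>E \<in> F)"

definition Gal :: "'a set set \<Rightarrow> 'b rel \<Rightarrow> 'c rel \<Rightarrow> bool" where
  "Gal F mu lam \<longleftrightarrow>
     (\<forall>C. C \<subseteq> F \<and> (card_of C, lam) \<in> ordIso \<longrightarrow>
        (\<exists>E. E \<subseteq> C \<and> (card_of E, mu) \<in> ordIso \<and> \<Inter>E \<in> F))"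

definition neg_st_Gal :: "'a rel \<Rightarrow> 'b rel \<Rightarrow> 'c rel \<Rightarrow> bool" where
  "neg_st_Gal kappa mu lam \<longleftrightarrow>
     (\<exists>C. C \<subseteq> club_filter (cardSuc kappa) \<and> (card_of C, lam) \<in> ordIso \<and>
        (\<forall>E. E \<subseteq> C \<and> (card_of E, mu) \<in> ordIso \<longrightarrow>
             (card_of (\<Inter>E), kappa) \<in> ordLess))"

end

theory Submission imports Defs begin

unbundle cardinal_syntax


lemma wo_total: "Well_order w \<Longrightarrow> x \<in> Field w \<Longrightarrow> y \<in> Field w \<Longrightarrow> (x,y) \<in> w \<or> (y,x) \<in> w"
  by (metis wo_rel.TOTALS wo_rel_def)
lemma wo_antisym: "Well_order w \<Longrightarrow> (x,y) \<in> w \<Longrightarrow> (y,x) \<in> w \<Longrightarrow> x = y"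
  by (metis wo_rel.ANTISYM antisymD wo_rel_def)
lemma wo_trans: "Well_order w \<Longrightarrow> (x,y) \<in> w \<Longrightarrow> (y,z) \<in> w \<Longrightarrow> (x,z) \<in> w"
  by (metis wo_rel.TRANS transD wo_rel_def)
lemma wo_refl: "Well_order w \<Longrightarrow> x \<in> Field w \<Longrightarrow> (x,x) \<in> w"
  by (metis wo_rel.REFL refl_onD wo_rel_def)

lemma wo_strict_trans:
  assumes w: "Well_order w" and xy: "(x,y) \<in> w" and ne: "x \<noteq> y" and yz: "(y,z) \<in> w"
  shows "(x,z) \<in> w \<and> x \<noteq> z"
proof
  show "(x,z) \<in> w" using wo_trans[OF w xy yz] .
  show "x \<noteq> z"
  proof
    assume "x = z"
    then have "(y,x) \<in> w" using yz by simp
    then have "x = y" using wo_antisym[OF w xy] by simp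
    then show False using ne by simp
  qed
qed

lemma wo_strict_trans2:
  assumes w: "Well_order w" and xy: "(x,y) \<in> w" and yz: "(y,z) \<in> w" and ne: "y \<noteq> z"
  shows "(x,z) \<in> w \<and> x \<noteq> z"
proof
  show "(x,z) \<in> w" using wo_trans[OF w xy yz] .
  show "x \<noteq> z"
  proof
    assume "x = z"
    then have "(z,y) \<in> w" using xy by simp
    then have "y = z" using wo_antisym[OF w yz] by simp
    then show False using ne by simp
  qed
qed

lemma lub_exists:
  assumes w: "Well_order w" and B: "B \<subseteq> Field w" "B \<noteq> {}" "u \<in> Field w" "\<forall>b\<in>B. (b,u)\<in>w"
  shows "\<exists>a. is_lub w B a"
proof -
  define U where "U = {a\<in>Field w. \<forall>b\<in>B. (b,a)\<in>w}"
  have U1: "U \<subseteq> Field w" unfolding U_def by blast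
  have U2: "U \<noteq> {}" unfolding U_def using B(3,4) by blast
  have wr: "wo_rel w" using w by (simp add: wo_rel_def)
  have m: "wo_rel.minim w U \<in> U" using wo_rel.minim_in[OF wr U1 U2] .
  have l: "\<And>b. b \<in> U \<Longrightarrow> (wo_rel.minim w U, b) \<in> w" using wo_rel.minim_least[OF wr U1] .
  have "is_lub w B (wo_rel.minim w U)" unfolding is_lub_def
  proof (intro conjI ballI impI)
    show "wo_rel.minim w U \<in> Field w" using m U1 by blast
    show "\<And>b. b \<in> B \<Longrightarrow> (b, wo_rel.minim w U) \<in> w" using m unfolding U_def by blast
    show "\<And>a'. a' \<in> Field w \<Longrightarrow> \<forall>b\<in>B. (b, a') \<in> w \<Longrightarrow> (wo_rel.minim w U, a') \<in> w"
      using l unfolding U_def by blast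
  qed
  then show ?thesis by blast
qed

locale P6 =
  fixes r :: "'a rel" and F :: "'a set set"
  assumes CO: "Card_order r" and INF: "\<not> finite (Field r)"
    and FO: "filter_over (Field r) F" and CF: "complete_filter r F"
    and CL: "club_filter r \<subseteq> F"

lemma (in P6) WO: "Well_order r" using CO unfolding card_order_on_def by simp

lemma (in P6) no_max: "i \<in> Field r \<Longrightarrow> \<exists>j\<in>Field r. (i,j)\<in>r \<and> i\<noteq>j"
  using infinite_Card_order_limit[OF CO INF] by blast

lemma (in P6) club_in_F: "club r X \<Longrightarrow> X \<in> F"
  using CL unfolding club_filter_def club_def by blast

lemma (in P6) F_sub: "X \<in> F \<Longrightarrow> X \<subseteq> Field r" using FO unfolding filter_over_def by blast
lemma (in P6) F_empty: "{} \<notin> F" using FO unfolding filter_over_def by blast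
lemma (in P6) F_int: "X \<in> F \<Longrightarrow> Y \<in> F \<Longrightarrow> X \<inter> Y \<in> F" using FO unfolding filter_over_def by blast
lemma (in P6) F_up: "X \<in> F \<Longrightarrow> X \<subseteq> Y \<Longrightarrow> Y \<subseteq> Field r \<Longrightarrow> Y \<in> F" using FO unfolding filter_over_def by blast

lemma (in P6) tail_club: assumes x: "x \<in> Field r" shows "club r {y\<in>Field r. (x,y)\<in>r \<and> x\<noteq>y}"
proof -
  have cl: "closed_in_wo r {y\<in>Field r. (x,y)\<in>r \<and> x\<noteq>y}"
    unfolding closed_in_wo_def is_lub_def
  proof (intro allI impI)
    fix B a assume h: "B \<subseteq> {y \<in> Field r. (x, y) \<in> r \<and> x \<noteq> y} \<and> B \<noteq> {} \<and>
       a \<in> Field r \<and> (\<forall>b\<in>B. (b, a) \<in> r) \<and> (\<forall>a'\<in>Field r. (\<forall>b\<in>B. (b, a') \<in> r) \<longrightarrow> (a, a') \<in> r)"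
    then obtain b where b: "b \<in> B" by blast
    have "(x,b) \<in> r" "x \<noteq> b" "(b,a) \<in> r" using h b by auto
    then show "a \<in> {y \<in> Field r. (x, y) \<in> r \<and> x \<noteq> y}"
      using h wo_strict_trans[OF WO \<open>(x,b) \<in> r\<close> \<open>x \<noteq> b\<close> \<open>(b,a) \<in> r\<close>] by blast
  qed
  have ub: "unbounded_in_wo r {y\<in>Field r. (x,y)\<in>r \<and> x\<noteq>y}"
    unfolding unbounded_in_wo_def
  proof
    fix a assume a: "a \<in> Field r"
    obtain m where m: "m \<in> Field r" "(a,m) \<in> r" "(x,m) \<in> r"
      using wo_total[OF WO a x] x a wo_refl[OF WO] by blast
    obtain j where j: "j \<in> Field r" "(m,j) \<in> r" "m \<noteq> j" using no_max m(1) by blast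
    have "(a,j) \<in> r \<and> a \<noteq> j" using wo_strict_trans2[OF WO m(2) j(2,3)] .
    moreover have "(x,j) \<in> r \<and> x \<noteq> j" using wo_strict_trans2[OF WO m(3) j(2,3)] .
    ultimately show "\<exists>c\<in>{y \<in> Field r. (x, y) \<in> r \<and> x \<noteq> y}. (a, c) \<in> r \<and> a \<noteq> c"
      using j by blast
  qed
  show ?thesis using cl ub unfolding club_def by blast
qed

lemma (in P6) small_notin: assumes "|X| <o r" shows "X \<notin> F"
proof
  assume XF: "X \<in> F"
  then have "X \<noteq> {}" using F_empty by blast
  let ?T = "\<lambda>x. {y\<in>Field r. (x,y)\<in>r \<and> x\<noteq>y}"
  have X: "X \<subseteq> Field r" using XF F_sub by blast
  have "?T ` X \<subseteq> F" using X tail_club club_in_F by blast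
  moreover have "?T ` X \<noteq> {}" using \<open>X \<noteq> {}\<close> by blast
  moreover have "|?T ` X| <o r" using card_of_image ordLeq_ordLess_trans assms by blast
  ultimately have "\<Inter>(?T ` X) \<in> F" using CF unfolding complete_filter_def by blast
  then have "X \<inter> \<Inter>(?T ` X) \<in> F" using XF F_int by blast
  moreover have "X \<inter> \<Inter>(?T ` X) = {}" by blast
  ultimately show False using F_empty by simp
qed



lemma strict_seq:
  assumes w: "Well_order w" and S: "\<forall>n. (g n, g (Suc n)) \<in> w \<and> g n \<noteq> g (Suc n)"
  shows "m < n \<Longrightarrow> (g m, g n) \<in> w \<and> g m \<noteq> g n"
proof (induction n)
  case 0 then show ?case by simp
next
  case (Suc n)
  show ?case
  proof (cases "m = n")
    case True then show ?thesis using S by simp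
  next
    case False
    then have "(g m, g n) \<in> w \<and> g m \<noteq> g n" using Suc by simp
    moreover have "(g n, g (Suc n)) \<in> w" using S by blast
    ultimately show ?thesis using wo_strict_trans[OF w, of "g m" "g n" "g (Suc n)"] by blast
  qed
qed

lemma strict_seqF:
  assumes w: "Well_order w" and S: "\<forall>n. g n \<in> Field w \<and> (g n, g (Suc n)) \<in> w \<and> g n \<noteq> g (Suc n)"
    and mn: "m < n"
  shows "(g m, g n) \<in> w \<and> g m \<noteq> g n"
proof -
  have S': "\<forall>n. (g n, g (Suc n)) \<in> w \<and> g n \<noteq> g (Suc n)" using S by blast
  show ?thesis using strict_seq[OF w S' mn] .
qed

lemma mono_seq:
  assumes w: "Well_order w" and S: "\<forall>n. g n \<in> Field w \<and> (g n, g (Suc n)) \<in> w \<and> g n \<noteq> g (Suc n)"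
    and mn: "m \<le> n"
  shows "(g m, g n) \<in> w"
proof (cases "m = n")
  case True then show ?thesis using S wo_refl[OF w] by simp
next
  case False
  with mn have "m < n" by simp
  then show ?thesis using strict_seqF[OF w S] by blast
qed

lemma seq_le_rev:
  assumes w: "Well_order w" and S: "\<forall>n. g n \<in> Field w \<and> (g n, g (Suc n)) \<in> w \<and> g n \<noteq> g (Suc n)"
  and "(g m, g n) \<in> w" shows "m \<le> n"
proof (rule ccontr)
  assume "\<not> m \<le> n" then have "n < m" by simp
  then have "(g n, g m) \<in> w \<and> g n \<noteq> g m" using strict_seqF[OF w S] by blast
  then show False using wo_antisym[OF w assms(3)] by auto
qed

lemma seq_club:
  assumes w: "Well_order w" and S: "\<forall>n. g n \<in> Field w \<and> (g n, g (Suc n)) \<in> w \<and> g n \<noteq> g (Suc n)"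
  and cof: "\<forall>u\<in>Field w. \<exists>n. (u, g n) \<in> w"
  shows "club w (range g)"
proof -
  have ub: "unbounded_in_wo w (range g)" unfolding unbounded_in_wo_def
  proof
    fix a assume a: "a \<in> Field w"
    then obtain n where n: "(a, g n) \<in> w" using cof by blast
    moreover have "(g n, g (Suc n)) \<in> w" "g n \<noteq> g (Suc n)" using S by blast+
    ultimately have "(a, g (Suc n)) \<in> w \<and> a \<noteq> g (Suc n)" using wo_strict_trans2[OF w] by blast
    then show "\<exists>c\<in>range g. (a, c) \<in> w \<and> a \<noteq> c" by blast
  qed
  have cl: "closed_in_wo w (range g)" unfolding closed_in_wo_def
  proof (intro allI impI)
    fix B a assume h: "B \<subseteq> range g \<and> B \<noteq> {} \<and> is_lub w B a"
    then have a: "a \<in> Field w" "\<forall>b\<in>B. (b,a) \<in> w" "\<forall>a'\<in>Field w. (\<forall>b\<in>B. (b, a') \<in> w) \<longrightarrow> (a, a') \<in> w"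
      unfolding is_lub_def by auto
    obtain N where N: "(a, g N) \<in> w" using cof a(1) by blast
    let ?M = "{m. g m \<in> B}"
    have M: "?M \<subseteq> {..N}"
    proof
      fix m assume "m \<in> ?M"
      then have "(g m, g N) \<in> w" using a(2) N wo_trans[OF w] by blast
      then show "m \<in> {..N}" using seq_le_rev[OF w S] by simp
    qed
    then have fin: "finite ?M" using finite_subset by blast
    have ne: "?M \<noteq> {}" using h by blast
    let ?m = "Max ?M"
    have mM: "?m \<in> ?M" using Max_in fin ne by blast
    have "\<forall>b\<in>B. (b, g ?m) \<in> w"
    proof
      fix b assume "b \<in> B"
      then obtain m where "b = g m" "m \<in> ?M" using h by blast
      then show "(b, g ?m) \<in> w" using Max_ge[OF fin] mono_seq[OF w S] by blast
    qed
    then have "(a, g ?m) \<in> w" using a(3) S by blast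
    moreover have "(g ?m, a) \<in> w" using a(2) mM by blast
    ultimately have "a = g ?m" using wo_antisym[OF w, of a "g ?m"] by blast
    then show "a \<in> range g" by blast
  qed
  show ?thesis unfolding club_def using ub cl S by blast
qed


lemma (in P6) seq_bounded:
  assumes S: "\<forall>n. g n \<in> Field r \<and> (g n, g (Suc n)) \<in> r \<and> g n \<noteq> g (Suc n)"
  shows "\<exists>u\<in>Field r. \<forall>n. (g n, u) \<in> r"
proof (rule ccontr)
  have w: "Well_order r" using WO .
  assume "\<not> ?thesis"
  then have cof: "\<forall>u\<in>Field r. \<exists>n. (u, g n) \<in> r"
  proof (intro ballI)
    fix u assume nt: "\<not> (\<exists>u\<in>Field r. \<forall>n. (g n, u) \<in> r)" and u: "u \<in> Field r"
    then obtain n where n: "(g n, u) \<notin> r" by blast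
    have "g n \<in> Field r" using S by blast
    then show "\<exists>n. (u, g n) \<in> r" using wo_total[OF w u, of "g n"] n by blast
  qed
  let ?g0 = "\<lambda>n. g (2*n)" and ?g1 = "\<lambda>n. g (2*n+1)"
  have S0: "\<forall>n. ?g0 n \<in> Field r \<and> (?g0 n, ?g0 (Suc n)) \<in> r \<and> ?g0 n \<noteq> ?g0 (Suc n)"
  proof
    fix n have "2*n < 2*(Suc n)" by simp
    then show "?g0 n \<in> Field r \<and> (?g0 n, ?g0 (Suc n)) \<in> r \<and> ?g0 n \<noteq> ?g0 (Suc n)"
      using strict_seqF[OF w S, of "2*n" "2*Suc n"] S by blast
  qed
  have S1: "\<forall>n. ?g1 n \<in> Field r \<and> (?g1 n, ?g1 (Suc n)) \<in> r \<and> ?g1 n \<noteq> ?g1 (Suc n)"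
  proof
    fix n have "2*n+1 < 2*(Suc n)+1" by simp
    then show "?g1 n \<in> Field r \<and> (?g1 n, ?g1 (Suc n)) \<in> r \<and> ?g1 n \<noteq> ?g1 (Suc n)"
      using strict_seqF[OF w S, of "2*n+1" "2*Suc n+1"] S by blast
  qed
  have cof0: "\<forall>u\<in>Field r. \<exists>n. (u, ?g0 n) \<in> r"
  proof
    fix u assume "u \<in> Field r" then obtain n where "(u, g n) \<in> r" using cof by blast
    moreover have "(g n, g (2*n)) \<in> r" using mono_seq[OF w S] by simp
    ultimately show "\<exists>n. (u, ?g0 n) \<in> r" using wo_trans[OF w] by blast
  qed
  have cof1: "\<forall>u\<in>Field r. \<exists>n. (u, ?g1 n) \<in> r"
  proof
    fix u assume "u \<in> Field r" then obtain n where "(u, g n) \<in> r" using cof by blast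
    moreover have "(g n, g (2*n+1)) \<in> r" using mono_seq[OF w S] by simp
    ultimately show "\<exists>n. (u, ?g1 n) \<in> r" using wo_trans[OF w] by blast
  qed
  have "range ?g0 \<in> F" using seq_club[OF w S0 cof0] club_in_F by blast
  moreover have "range ?g1 \<in> F" using seq_club[OF w S1 cof1] club_in_F by blast
  ultimately have "range ?g0 \<inter> range ?g1 \<in> F" using F_int by blast
  moreover have "range ?g0 \<inter> range ?g1 = {}"
  proof -
    have "g (2*m) \<noteq> g (2*n+1)" for m n
    proof (cases "2*m < 2*n+1")
      case True then show ?thesis using strict_seqF[OF w S, of "2*m" "2*n+1"] by blast
    next
      case False then have "2*n+1 < 2*m" by arith
      then show ?thesis using strict_seqF[OF w S, of "2*n+1" "2*m"] by auto
    qed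
    then show ?thesis by blast
  qed
  ultimately show False using F_empty by simp
qed


definition cand :: "'a rel \<Rightarrow> 'b rel \<Rightarrow> 'b \<Rightarrow> ('a \<Rightarrow> 'b) \<Rightarrow> bool" where
  "cand r s \<delta> c \<longleftrightarrow> (\<forall>i\<in>Field r. c i \<in> Field s \<and> (c i, \<delta>) \<in> s \<and> c i \<noteq> \<delta>) \<and>
    (\<forall>i\<in>Field r. \<forall>j\<in>Field r. (i,j)\<in>r \<and> i\<noteq>j \<longrightarrow> (c i, c j)\<in>s \<and> c i \<noteq> c j) \<and>
    (\<forall>B a. B \<subseteq> Field r \<and> B \<noteq> {} \<and> is_lub r B a \<longrightarrow> is_lub s (c`B) (c a)) \<and>
    (\<forall>x. (x,\<delta>)\<in>s \<and> x\<noteq>\<delta> \<longrightarrow> (\<exists>i\<in>Field r. (x, c i)\<in>s))"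

definition unb_below :: "'b rel \<Rightarrow> 'b set \<Rightarrow> 'b \<Rightarrow> bool" where
  "unb_below s D \<delta> \<longleftrightarrow> (\<forall>x. (x,\<delta>)\<in>s \<and> x\<noteq>\<delta> \<longrightarrow> (\<exists>d\<in>D. (x,d)\<in>s \<and> x\<noteq>d \<and> (d,\<delta>)\<in>s \<and> d\<noteq>\<delta>))"


lemma (in P6) preimage_club:
  fixes s :: "'b rel"
  assumes ws: "Well_order s" and C: "cand r s \<delta> c" and D: "club s D" and U: "unb_below s D \<delta>"
  shows "club r {i\<in>Field r. c i \<in> D}"
proof -
  have w: "Well_order r" using WO .
  have C1: "\<And>i. i\<in>Field r \<Longrightarrow> c i \<in> Field s \<and> (c i, \<delta>) \<in> s \<and> c i \<noteq> \<delta>"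
   and C2: "\<And>i j. i\<in>Field r \<Longrightarrow> j\<in>Field r \<Longrightarrow> (i,j)\<in>r \<Longrightarrow> i\<noteq>j \<Longrightarrow> (c i, c j)\<in>s \<and> c i \<noteq> c j"
   and C3: "\<And>B a. B \<subseteq> Field r \<Longrightarrow> B \<noteq> {} \<Longrightarrow> is_lub r B a \<Longrightarrow> is_lub s (c`B) (c a)"
   and C4: "\<And>x. (x,\<delta>)\<in>s \<Longrightarrow> x\<noteq>\<delta> \<Longrightarrow> (\<exists>i\<in>Field r. (x, c i)\<in>s)"
    using C unfolding cand_def by blast+
  have Dcl: "\<And>B a. B \<subseteq> D \<Longrightarrow> B \<noteq> {} \<Longrightarrow> is_lub s B a \<Longrightarrow> a \<in> D"
    using D unfolding club_def closed_in_wo_def by blast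
  have cl: "closed_in_wo r {i\<in>Field r. c i \<in> D}" unfolding closed_in_wo_def
  proof (intro allI impI)
    fix B a assume h: "B \<subseteq> {i \<in> Field r. c i \<in> D} \<and> B \<noteq> {} \<and> is_lub r B a"
    then have "is_lub s (c`B) (c a)" using C3 by blast
    moreover have "c`B \<subseteq> D" "c`B \<noteq> {}" using h by auto
    ultimately have "c a \<in> D" using Dcl by blast
    moreover have "a \<in> Field r" using h unfolding is_lub_def by blast
    ultimately show "a \<in> {i \<in> Field r. c i \<in> D}" by blast
  qed
  define P where "P k k' \<longleftrightarrow> k' \<in> Field r \<and> (k,k')\<in>r \<and> k\<noteq>k' \<and> (\<exists>d\<in>D. (c k,d)\<in>s \<and> c k\<noteq>d \<and> (d, c k')\<in>s)" for k k'
  have exP: "\<exists>k'. P k k'" if k: "k \<in> Field r" for k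
  proof -
    obtain d where d: "d \<in> D" "(c k,d)\<in>s" "c k\<noteq>d" "(d,\<delta>)\<in>s" "d\<noteq>\<delta>" using U C1[OF k] unfolding unb_below_def by blast
    obtain k' where k': "k' \<in> Field r" "(d, c k') \<in> s" using C4 d by blast
    have "(k,k')\<in>r \<and> k\<noteq>k'"
    proof (rule ccontr)
      assume "\<not> ((k,k')\<in>r \<and> k\<noteq>k')"
      then have "(k',k) \<in> r" using wo_total[OF w k k'(1)] by blast
      then have "(c k', c k) \<in> s"
        using C2[OF k'(1) k] wo_refl[OF ws] C1[OF k] by (cases "k = k'") auto
      then have "(d, c k) \<in> s" using k'(2) wo_trans[OF ws] by blast
      then show False using d wo_antisym[OF ws] by blast
    qed
    then show ?thesis unfolding P_def using k' d by blast
  qed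
  define nxt where "nxt k = (SOME k'. P k k')" for k
  have nxtP: "P k (nxt k)" if "k \<in> Field r" for k unfolding nxt_def using someI_ex exP[OF that] by metis
  have ub: "unbounded_in_wo r {i\<in>Field r. c i \<in> D}" unfolding unbounded_in_wo_def
  proof
    fix i0 assume i0: "i0 \<in> Field r"
    define g where "g n = (nxt ^^ n) i0" for n
    have gF: "g n \<in> Field r" for n
      by (induction n) (use i0 nxtP in \<open>auto simp: g_def P_def\<close>)
    have gP: "P (g n) (g (Suc n))" for n using nxtP[OF gF[of n]] by (simp add: g_def)
    have S: "\<forall>n. g n \<in> Field r \<and> (g n, g (Suc n)) \<in> r \<and> g n \<noteq> g (Suc n)"
      using gF gP unfolding P_def by blast
    obtain u where u: "u \<in> Field r" "\<forall>n. (g n, u) \<in> r" using seq_bounded[OF S] by blast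
    let ?B = "range (\<lambda>n. g (Suc n))"
    obtain j where j: "is_lub r ?B j" using lub_exists[OF w, of ?B u] u gF by blast
    have jF: "j \<in> Field r" using j unfolding is_lub_def by blast
    have "(g 1, j) \<in> r" using j unfolding is_lub_def by auto
    moreover have "(i0, g 1) \<in> r \<and> i0 \<noteq> g 1" using S[rule_format, of 0] by (simp add: g_def)
    ultimately have ij: "(i0, j) \<in> r \<and> i0 \<noteq> j" using wo_strict_trans[OF w] by blast
    have lc: "is_lub s (c`?B) (c j)" using C3[OF _ _ j] gF by blast
    let ?Ds = "{d\<in>D. (d, c j)\<in>s}"
    have key: "\<exists>d\<in>?Ds. (c (g (Suc n)), d) \<in> s" for n
    proof -
      obtain d where d: "d\<in>D" "(c (g (Suc n)),d)\<in>s" "(d, c (g (Suc (Suc n))))\<in>s"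
        using gP[of "Suc n"] unfolding P_def by blast
      have "(c (g (Suc (Suc n))), c j) \<in> s" using lc unfolding is_lub_def by blast
      then have "(d, c j) \<in> s" using d(3) wo_trans[OF ws] by blast
      then show ?thesis using d by blast
    qed
    have "is_lub s ?Ds (c j)" unfolding is_lub_def
    proof (intro conjI ballI impI)
      show "c j \<in> Field s" using lc unfolding is_lub_def by blast
      show "\<And>b. b \<in> ?Ds \<Longrightarrow> (b, c j) \<in> s" by blast
      fix a' assume a': "a' \<in> Field s" "\<forall>b\<in>?Ds. (b, a') \<in> s"
      have "\<forall>b\<in>c`?B. (b, a') \<in> s"
      proof
        fix b assume "b \<in> c`?B"
        then obtain n where n: "b = c (g (Suc n))" by blast
        obtain d where "d\<in>?Ds" "(b, d)\<in>s" using key n by blast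
        then show "(b,a') \<in> s" using a' wo_trans[OF ws] by blast
      qed
      then show "(c j, a') \<in> s" using lc a'(1) unfolding is_lub_def by blast
    qed
    moreover have "?Ds \<noteq> {}" using key by blast
    ultimately have "c j \<in> D" using Dcl[of ?Ds] by blast
    then show "\<exists>cc\<in>{i \<in> Field r. c i \<in> D}. (i0, cc) \<in> r \<and> i0 \<noteq> cc" using jF ij by blast
  qed
  show ?thesis unfolding club_def using cl ub by blast
qed



lemma (in P6) exists_cand:
  assumes D: "club (cardSuc r) D"
  shows "\<exists>\<delta> c. \<delta> \<in> Field (cardSuc r) \<and> cand r (cardSuc r) \<delta> c \<and> unb_below (cardSuc r) D \<delta>"
proof -
  let ?s = "cardSuc r"
  have w: "Well_order r" using WO .
  have cs: "Card_order ?s" using cardSuc_Card_order[OF CO] .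
  have ws: "Well_order ?s" using cs unfolding card_order_on_def by simp
  have infs: "\<not> finite (Field ?s)" using cardSuc_finite[OF CO] INF by simp
  have reg: "regularCard ?s" using infinite_cardSuc_regularCard[OF INF CO] .
  have DF: "D \<subseteq> Field ?s" using D unfolding club_def by blast
  have cofD: "cofinal D ?s" using D unfolding club_def unbounded_in_wo_def cofinal_def by blast
  have Dcard: "|D| =o ?s" using reg DF cofD unfolding regularCard_def by blast
  let ?w = "Restr ?s D"
  have ww: "Well_order ?w" using Well_order_Restr[OF ws] .
  have Fw: "Field ?w = D" using Refl_Field_Restr2[OF _ DF] ws unfolding well_order_on_def linear_order_on_def partial_order_on_def preorder_on_def by blast
  have "|D| \<le>o ?w" using card_of_least ww Fw by (metis well_order_on_Well_order)
  then have "?s \<le>o ?w" using Dcard ordIso_ordLeq_trans ordIso_symmetric by blast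
  then have "r \<le>o ?w" using cardSuc_greater[OF CO] ordLess_ordLeq_trans ordLess_imp_ordLeq by blast
  then obtain e where e: "embed r ?w e" unfolding ordLeq_def by blast
  have ecomp: "compat r ?w e" and einj: "inj_on e (Field r)" and eofil: "wo_rel.ofilter ?w (e`Field r)"
    using e embed_iff_compat_inj_on_ofilter[OF w ww] by blast+
  have eD: "e i \<in> D" if "i \<in> Field r" for i using embed_Field[OF e] Fw that by blast
  have emono: "(e i, e j) \<in> ?s" if "(i,j) \<in> r" for i j using ecomp that unfolding compat_def by blast
  have estrict: "(e i, e j) \<in> ?s \<and> e i \<noteq> e j" if "i \<in> Field r" "j \<in> Field r" "(i,j) \<in> r" "i \<noteq> j" for i j
    using emono[OF that(3)] einj that unfolding inj_on_def by blast
  have erefl: "(i,j) \<in> r" if "i \<in> Field r" "j \<in> Field r" "(e i, e j) \<in> ?s" for i j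
  proof (rule ccontr)
    assume "(i,j) \<notin> r"
    then have "(j,i) \<in> r" "j \<noteq> i" using wo_total[OF w that(1,2)] wo_refl[OF w] that by auto
    then show False using estrict[OF that(2,1)] that(3) wo_antisym[OF ws] by blast
  qed
  let ?R = "e`Field r"
  have "|?R| \<le>o |Field r|" by (rule card_of_image)
  then have Rless: "|?R| <o ?s" using card_of_Field_ordIso[OF CO] cardSuc_greater[OF CO]
    ordLeq_ordLess_trans ordIso_ordLess_trans by blast
  have RF: "?R \<subseteq> Field ?s" using eD DF by blast
  have "\<not> cofinal ?R ?s"
  proof
    assume "cofinal ?R ?s"
    then have "|?R| =o ?s" using reg RF unfolding regularCard_def by blast
    then show False using Rless not_ordLess_ordIso by blast
  qed
  then obtain a where a: "a \<in> Field ?s" "\<forall>b\<in>?R. a = b \<or> (a,b) \<notin> ?s" unfolding cofinal_def by blast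
  have aub: "\<forall>b\<in>?R. (b,a) \<in> ?s"
  proof
    fix b assume b: "b \<in> ?R"
    then have bF: "b \<in> Field ?s" using RF by blast
    show "(b,a) \<in> ?s"
    proof (cases "a = b")
      case True then show ?thesis using wo_refl[OF ws bF] by simp
    next
      case False
      then have "(a,b) \<notin> ?s" using a(2) b by blast
      then show ?thesis using wo_total[OF ws a(1) bF] by blast
    qed
  qed
  let ?U = "{x\<in>Field ?s. \<forall>b\<in>?R. (b,x)\<in>?s \<and> b\<noteq>x}"
  have aU: "a \<in> ?U"
  proof -
    have "b \<noteq> a" if bR: "b \<in> ?R" for b
    proof
      assume ba: "b = a"
      obtain i where i: "i \<in> Field r" "b = e i" using bR by blast
      obtain j where j: "j \<in> Field r" "(i,j) \<in> r" "i \<noteq> j" using no_max[OF i(1)] by blast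
      have "(e i, e j) \<in> ?s" "e i \<noteq> e j" using estrict i j by blast+
      moreover have "(e j, a) \<in> ?s" using aub j by blast
      moreover have "(e j, e i) \<in> ?s" using \<open>(e j, a) \<in> ?s\<close> ba i(2) by simp
      ultimately show False using wo_antisym[OF ws, of "e i" "e j"] by auto
    qed
    then show ?thesis using a aub by blast
  qed
  define \<delta> where "\<delta> = wo_rel.minim ?s ?U"
  have UF: "?U \<subseteq> Field ?s" by blast
  have dU: "\<delta> \<in> ?U" unfolding \<delta>_def using wo_rel.minim_in[OF _ UF] aU ws by (auto simp: wo_rel_def)
  have dleast: "(\<delta>, x) \<in> ?s" if "x \<in> ?U" for x
    unfolding \<delta>_def using wo_rel.minim_least[OF _ UF that] ws by (auto simp: wo_rel_def)
  have below: "\<exists>i\<in>Field r. (x, e i) \<in> ?s" if "(x,\<delta>) \<in> ?s" "x \<noteq> \<delta>" for x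
  proof -
    have xF: "x \<in> Field ?s" using that(1) by (auto simp: Field_def)
    have "x \<notin> ?U"
    proof
      assume "x \<in> ?U"
      then have "(\<delta>, x) \<in> ?s" by (rule dleast)
      then have "x = \<delta>" using wo_antisym[OF ws that(1)] by simp
      then show False using that(2) by simp
    qed
    then obtain b where b: "b \<in> ?R" "\<not> ((b,x)\<in>?s \<and> b\<noteq>x)" using xF by blast
    have bF: "b \<in> Field ?s" using b(1) RF by blast
    have "(x,b) \<in> ?s"
    proof (cases "b = x")
      case True then show ?thesis using wo_refl[OF ws xF] by simp
    next
      case False
      then have "(b,x) \<notin> ?s" using b(2) by blast
      then show ?thesis using wo_total[OF ws xF bF] by blast
    qed
    then show ?thesis using b by blast
  qed
  have cont: "is_lub ?s (e`B) (e a0)" if B: "B \<subseteq> Field r" "B \<noteq> {}" "is_lub r B a0" for B a0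
  proof -
    have a0: "a0 \<in> Field r" "\<forall>b\<in>B. (b,a0)\<in>r" "\<forall>a'\<in>Field r. (\<forall>b\<in>B. (b, a') \<in> r) \<longrightarrow> (a0, a') \<in> r"
      using B(3) unfolding is_lub_def by auto
    have ub: "\<forall>b\<in>e`B. (b, e a0) \<in> ?s" using a0(2) emono by blast
    obtain z where z: "is_lub ?s (e`B) z"
      using lub_exists[OF ws, of "e`B" "e a0"] ub B eD DF a0(1) by blast
    have "e`B \<subseteq> D" using eD B by blast
    then have zD: "z \<in> D" using D z B(2) unfolding club_def closed_in_wo_def by blast
    have zea: "(z, e a0) \<in> ?s" using z ub eD[OF a0(1)] DF unfolding is_lub_def by blast
    then have "(z, e a0) \<in> ?w" using zD eD[OF a0(1)] by blast
    then have "z \<in> ?R" using eofil a0(1) unfolding Order_Relation.ofilter_def under_def by blast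
    then obtain a1 where a1: "a1 \<in> Field r" "z = e a1" by blast
    have "\<forall>b\<in>B. (b,a1)\<in>r" using erefl a1 z B(1) unfolding is_lub_def by blast
    then have "(a0,a1) \<in> r" using a0(3) a1 by blast
    then have "(e a0, z) \<in> ?s" using emono a1 by blast
    then have "z = e a0" using wo_antisym[OF ws zea] by simp
    then show ?thesis using z by simp
  qed
  have C: "cand r ?s \<delta> e" unfolding cand_def
  proof (intro conjI ballI allI impI)
    fix i assume i: "i \<in> Field r"
    show "e i \<in> Field ?s" using eD[OF i] DF by blast
    show "(e i, \<delta>) \<in> ?s" using dU i by blast
    show "e i \<noteq> \<delta>" using dU i by blast
  next
    fix i j assume "i \<in> Field r" "j \<in> Field r" "(i, j) \<in> r \<and> i \<noteq> j"
    then have "(e i, e j) \<in> ?s \<and> e i \<noteq> e j" using estrict by blast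
    then show "(e i, e j) \<in> ?s" "e i \<noteq> e j" by blast+
  next
    fix B a0 assume "B \<subseteq> Field r \<and> B \<noteq> {} \<and> is_lub r B a0"
    then show "is_lub ?s (e`B) (e a0)" using cont by blast
  next
    fix x assume "(x, \<delta>) \<in> ?s \<and> x \<noteq> \<delta>"
    then show "\<exists>i\<in>Field r. (x, e i) \<in> ?s" using below by blast
  qed
  have UB: "unb_below ?s D \<delta>" unfolding unb_below_def
  proof (intro allI impI)
    fix x assume x: "(x, \<delta>) \<in> ?s \<and> x \<noteq> \<delta>"
    then obtain i where i: "i \<in> Field r" "(x, e i) \<in> ?s" using below by blast
    obtain j where j: "j \<in> Field r" "(i,j) \<in> r" "i \<noteq> j" using no_max[OF i(1)] by blast
    have "(e i, e j) \<in> ?s" "e i \<noteq> e j" using estrict i j by blast+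
    then have "(x, e j) \<in> ?s \<and> x \<noteq> e j" using wo_strict_trans2[OF ws i(2)] by blast
    moreover have "(e j, \<delta>) \<in> ?s \<and> e j \<noteq> \<delta>" using dU j by blast
    ultimately show "\<exists>d\<in>D. (x, d) \<in> ?s \<and> x \<noteq> d \<and> (d, \<delta>) \<in> ?s \<and> d \<noteq> \<delta>" using eD[OF j(1)] by blast
  qed
  show ?thesis using C UB dU by blast
qed


lemma exact_subset:
  assumes cs: "Card_order s" and le: "s \<le>o |A|" shows "\<exists>B\<subseteq>A. |B| =o s"
proof -
  have "|Field s| \<le>o |A|" using ordIso_ordLeq_trans[OF card_of_Field_ordIso[OF cs] le] .
  then have "\<exists>g. inj_on g (Field s) \<and> g ` Field s \<subseteq> A" using card_of_ordLeq[of "Field s" A] by simp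
  then obtain g where g: "inj_on g (Field s)" "g ` Field s \<subseteq> A" by blast
  have "bij_betw g (Field s) (g ` Field s)" using inj_on_imp_bij_betw[OF g(1)] .
  then have "|Field s| =o |g ` Field s|" using card_of_ordIso by blast
  then have "|g ` Field s| =o s" using ordIso_transitive[OF ordIso_symmetric card_of_Field_ordIso[OF cs]] by blast
  then show ?thesis using g(2) by blast
qed

lemma inj_card_le: "inj_on c X \<Longrightarrow> c ` X \<subseteq> Y \<Longrightarrow> |X| \<le>o |Y|"
  using card_of_ordLeq[of X Y] by blast

lemma (in P6) main_contra:
  assumes G: "Gal F (cardSuc r) (cardSuc (cardSuc r))"
    and N: "neg_st_Gal r (cardSuc r) (cardSuc (cardSuc r))"
  shows False
proof -
  let ?s = "cardSuc r" let ?t = "cardSuc ?s"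
  have w: "Well_order r" using WO .
  have cs: "Card_order ?s" using cardSuc_Card_order[OF CO] .
  have ct: "Card_order ?t" using cardSuc_Card_order[OF cs] .
  have ws: "Well_order ?s" using cs unfolding card_order_on_def by simp
  have infs: "\<not> finite (Field ?s)" using cardSuc_finite[OF CO] INF by simp
  have rs: "r <o ?s" using cardSuc_greater[OF CO] .
  have st: "?s <o ?t" using cardSuc_greater[OF cs] .
  obtain C where C: "C \<subseteq> club_filter ?s" "|C| =o ?t"
    and CE: "\<And>E. E \<subseteq> C \<Longrightarrow> |E| =o ?s \<Longrightarrow> |\<Inter>E| <o r"
    using N unfolding neg_st_Gal_def by blast
  define P where "P D \<delta> \<longleftrightarrow> \<delta> \<in> Field ?s \<and> (\<exists>c. cand r ?s \<delta> c) \<and> (\<exists>D'. club ?s D' \<and> D' \<subseteq> D \<and> unb_below ?s D' \<delta>)" for D \<delta>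
  have exP: "\<exists>\<delta>. P D \<delta>" if TH: "D \<in> C" for D
  proof -
    obtain D' where "club ?s D'" "D' \<subseteq> D" using C(1) TH unfolding club_filter_def by blast
    then show ?thesis unfolding P_def using exists_cand by blast
  qed
  define key where "key D = (SOME \<delta>. P D \<delta>)" for D
  define cf where "cf \<delta> = (SOME c. cand r ?s \<delta> c)" for \<delta>
  have keyP: "P D (key D)" if "D \<in> C" for D unfolding key_def by (rule someI_ex[OF exP[OF that]])
  have cfc: "cand r ?s (key D) (cf (key D))" if TH: "D \<in> C" for D
  proof -
    have "\<exists>c0. cand r ?s (key D) c0" using keyP[OF TH] unfolding P_def by blast
    then show ?thesis unfolding cf_def by (rule someI_ex)
  qed
  have preF: "{i\<in>Field r. cf (key D) i \<in> D} \<in> F" if TH: "D \<in> C" for D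
  proof -
    obtain D' where D': "club ?s D'" "D' \<subseteq> D" "unb_below ?s D' (key D)" using keyP[OF TH] unfolding P_def by blast
    have "club r {i\<in>Field r. cf (key D) i \<in> D'}" using preimage_club[OF ws cfc[OF TH] D'(1) D'(3)] .
    then have "{i\<in>Field r. cf (key D) i \<in> D'} \<in> F" using club_in_F by blast
    then show ?thesis by (rule F_up) (use D'(2) in auto)
  qed
  have "\<exists>\<delta>\<in>Field ?s. \<not> |{D\<in>C. key D = \<delta>}| \<le>o ?s"
  proof (rule ccontr)
    assume "\<not> ?thesis"
    then have all: "\<forall>\<delta>\<in>Field ?s. |{D\<in>C. key D = \<delta>}| \<le>o ?s" by blast
    have "|Field ?s| \<le>o ?s" using ordIso_imp_ordLeq[OF card_of_Field_ordIso[OF cs]] .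
    then have U1: "|\<Union>\<delta>\<in>Field ?s. {D\<in>C. key D = \<delta>}| \<le>o ?s"
      by (rule card_of_UNION_ordLeq_infinite_Field[OF infs cs]) (use all in blast)
    have kF: "\<forall>D\<in>C. key D \<in> Field ?s"
    proof
      fix D assume "D \<in> C" then have "P D (key D)" by (rule keyP)
      then show "key D \<in> Field ?s" unfolding P_def by blast
    qed
    have "C = (\<Union>\<delta>\<in>Field ?s. {D\<in>C. key D = \<delta>})" using kF by blast
    then have "|C| \<le>o ?s" using U1 by simp
    then have "?t \<le>o ?s" using ordIso_ordLeq_trans[OF ordIso_symmetric[OF C(2)]] by blast
    then show False using not_ordLess_ordLeq[OF st] by blast
  qed
  then obtain \<delta>0 where d0: "\<delta>0 \<in> Field ?s" "\<not> |{D\<in>C. key D = \<delta>0}| \<le>o ?s" by blast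
  define C1 where "C1 = {D\<in>C. key D = \<delta>0}"
  have C1C: "C1 \<subseteq> C" unfolding C1_def by blast
  have nC1: "\<not> |C1| \<le>o ?s" using d0(2) unfolding C1_def .
  then have "?s <o |C1|" using not_ordLeq_iff_ordLess[OF ws card_of_Well_order] by blast
  then have "?t \<le>o |C1|" using cardSuc_ordLess_ordLeq[OF cs card_of_Card_order] by blast
  moreover have "|C1| \<le>o ?t" using ordLeq_ordIso_trans[OF card_of_mono1[OF C1C] C(2)] .
  ultimately have C1t: "|C1| =o ?t" unfolding ordIso_iff_ordLeq by blast
  define c where "c = cf \<delta>0"
  have cC: "cand r ?s \<delta>0 c" if TH: "C1 \<noteq> {}"
  proof -
    obtain D where D: "D \<in> C1" using TH by blast
    then have "D \<in> C" "key D = \<delta>0" unfolding C1_def by blast+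
    then show ?thesis using cfc[of D] unfolding c_def by simp
  qed
  have C1ne: "C1 \<noteq> {}"
  proof
    assume "C1 = {}"
    then have "|C1| \<le>o |Field ?s|" using card_of_empty by simp
    then have "|C1| \<le>o ?s" using ordLeq_ordIso_trans[OF _ card_of_Field_ordIso[OF cs]] by blast
    then show False using nC1 by blast
  qed
  have cinj: "inj_on c (Field r)"
  proof (rule inj_onI)
    fix i j assume ij: "i \<in> Field r" "j \<in> Field r" "c i = c j"
    show "i = j"
    proof (rule ccontr)
      assume "i \<noteq> j"
      have st: "\<forall>i\<in>Field r. \<forall>j\<in>Field r. (i,j)\<in>r \<and> i\<noteq>j \<longrightarrow> (c i, c j)\<in>?s \<and> c i \<noteq> c j"
        using cC[OF C1ne] unfolding cand_def by blast
      have "(i,j) \<in> r \<or> (j,i) \<in> r" using wo_total[OF w ij(1,2)] .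
      then show False using st ij \<open>i \<noteq> j\<close> by blast
    qed
  qed
  define f where "f D = {i\<in>Field r. c i \<in> D}" for D
  have fF: "f D \<in> F" if "D \<in> C1" for D
  proof -
    have "D \<in> C" "key D = \<delta>0" using that unfolding C1_def by blast+
    then show ?thesis using preF[of D] unfolding f_def c_def by simp
  qed
  have cf_sub: "c ` f D \<subseteq> D" for D unfolding f_def by blast
  have fsub: "f D \<subseteq> Field r" for D unfolding f_def by blast
  show False
  proof (cases "\<exists>X\<in>f`C1. \<not> |{D\<in>C1. f D = X}| \<le>o r")
    case True
    then obtain X where X: "X \<in> f`C1" "\<not> |{D\<in>C1. f D = X}| \<le>o r" by blast
    have "r <o |{D\<in>C1. f D = X}|" using X(2) not_ordLeq_iff_ordLess[OF w card_of_Well_order] by blast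
    then have "?s \<le>o |{D\<in>C1. f D = X}|" using cardSuc_ordLess_ordLeq[OF CO card_of_Card_order] by blast
    then obtain E where E: "E \<subseteq> {D\<in>C1. f D = X}" "|E| =o ?s" using exact_subset[OF cs] by blast
    have EC: "E \<subseteq> C" using E(1) C1C by blast
    have small: "|\<Inter>E| <o r" using CE[OF EC E(2)] .
    have sub: "c ` X \<subseteq> \<Inter>E" using E(1) cf_sub by blast
    have XF: "X \<subseteq> Field r" using X(1) fsub by blast
    have inj: "inj_on c X" using inj_on_subset[OF cinj XF] .
    have "|X| <o r" using ordLeq_ordLess_trans[OF inj_card_le[OF inj sub] small] .
    then have "X \<notin> F" using small_notin by blast
    moreover have "X \<in> F" using X(1) fF by blast
    ultimately show False by blast
  next
    case False
    have fib: "\<forall>X\<in>f`C1. |{D\<in>C1. f D = X}| \<le>o ?s"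
    proof
      fix X assume "X \<in> f`C1"
      then have "|{D\<in>C1. f D = X}| \<le>o r" using False by blast
      then show "|{D\<in>C1. f D = X}| \<le>o ?s" using ordLeq_transitive[OF _ ordLess_imp_ordLeq[OF rs]] by blast
    qed
    have "\<not> |f`C1| \<le>o ?s"
    proof
      assume "|f`C1| \<le>o ?s"
      then have "|\<Union>X\<in>f`C1. {D\<in>C1. f D = X}| \<le>o ?s"
        by (rule card_of_UNION_ordLeq_infinite_Field[OF infs cs]) (use fib in blast)
      moreover have "C1 = (\<Union>X\<in>f`C1. {D\<in>C1. f D = X})" by blast
      ultimately have "|C1| \<le>o ?s" by simp
      then have "?t \<le>o ?s" using ordIso_ordLeq_trans[OF ordIso_symmetric[OF C1t]] by blast
      then show False using not_ordLess_ordLeq[OF st] by blast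
    qed
    then have "?s <o |f`C1|" using not_ordLeq_iff_ordLess[OF ws card_of_Well_order] by blast
    then have "?t \<le>o |f`C1|" using cardSuc_ordLess_ordLeq[OF cs card_of_Card_order] by blast
    moreover have "|f`C1| \<le>o ?t" using ordLeq_ordIso_trans[OF card_of_image C1t] .
    ultimately have fC1t: "|f`C1| =o ?t" unfolding ordIso_iff_ordLeq by blast
    have "f`C1 \<subseteq> F" using fF by blast
    have GG: "\<forall>C. C \<subseteq> F \<and> |C| =o ?t \<longrightarrow> (\<exists>E. E \<subseteq> C \<and> |E| =o ?s \<and> \<Inter>E \<in> F)"
      using G unfolding Gal_def .
    have "\<exists>E. E \<subseteq> f`C1 \<and> |E| =o ?s \<and> \<Inter>E \<in> F"
      using GG[rule_format, of "f`C1"] \<open>f`C1 \<subseteq> F\<close> fC1t by blast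
    then obtain E' where E': "E' \<subseteq> f`C1" "|E'| =o ?s" "\<Inter>E' \<in> F" by blast
    define h where "h X = (SOME D. D \<in> C1 \<and> f D = X)" for X
    have hX: "h X \<in> C1 \<and> f (h X) = X" if "X \<in> E'" for X
    proof -
      have "\<exists>D. D \<in> C1 \<and> f D = X" using E'(1) that by blast
      then show ?thesis unfolding h_def by (rule someI_ex)
    qed
    have hinj: "inj_on h E'"
    proof (rule inj_onI)
      fix X Y assume XY: "X \<in> E'" "Y \<in> E'" "h X = h Y"
      have "X = f (h X)" using hX[OF XY(1)] by simp
      also have "\<dots> = f (h Y)" using XY(3) by simp
      also have "\<dots> = Y" using hX[OF XY(2)] by simp
      finally show "X = Y" .
    qed
    let ?E = "h ` E'"
    have "bij_betw h E' ?E" using inj_on_imp_bij_betw[OF hinj] .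
    then have "|E'| =o |?E|" using card_of_ordIso by blast
    then have Es: "|?E| =o ?s" using ordIso_transitive[OF ordIso_symmetric E'(2)] by blast
    have EC: "?E \<subseteq> C" using hX C1C by blast
    have small: "|\<Inter>?E| <o r" using CE[OF EC Es] .
    have sub: "c ` (\<Inter>E') \<subseteq> \<Inter>?E"
    proof
      fix y assume "y \<in> c ` (\<Inter>E')"
      then obtain i where i: "i \<in> \<Inter>E'" "y = c i" by blast
      show "y \<in> \<Inter>?E"
      proof (rule InterI)
        fix D assume "D \<in> ?E"
        then obtain X where X: "X \<in> E'" "D = h X" by blast
        then have "i \<in> f D" using hX i by blast
        then show "y \<in> D" using i cf_sub by blast
      qed
    qed
    have inj: "inj_on c (\<Inter>E')" using inj_on_subset[OF cinj F_sub[OF E'(3)]] .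
    have "|\<Inter>E'| <o r" using ordLeq_ordLess_trans[OF inj_card_le[OF inj sub] small] .
    then show False using small_notin E'(3) by blast
  qed
qed

theorem proposition6p4:
  fixes r :: "'a rel" and F :: "'a set set"
  assumes "Card_order r"
    and "\<not> finite (Field r)"
    and "filter_over (Field r) F"
    and "complete_filter r F"
    and "club_filter r \<subseteq> F"
  shows "(Gal F (cardSuc r) (cardSuc (cardSuc r)) \<longrightarrow>
            \<not> neg_st_Gal r (cardSuc r) (cardSuc (cardSuc r)))
       \<and> (Gal F (cardSuc r) (cardSuc r) \<longrightarrow>
            \<not> neg_st_Gal r (cardSuc r) (cardSuc (cardSuc r)))"
proof -
  have cs: "Card_order (cardSuc r)" using cardSuc_Card_order[OF assms(1)] .
  have st: "cardSuc r \<le>o cardSuc (cardSuc r)" using cardSuc_ordLeq[OF cs] .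
  have G: "Gal F (cardSuc r) (cardSuc (cardSuc r))" if G1: "Gal F (cardSuc r) (cardSuc r)"
    unfolding Gal_def
  proof (intro allI impI)
    fix C' assume h: "C' \<subseteq> F \<and> |C'| =o cardSuc (cardSuc r)"
    then have "cardSuc r \<le>o |C'|" using ordLeq_ordIso_trans[OF st ordIso_symmetric] by blast
    then obtain C'' where C'': "C'' \<subseteq> C'" "|C''| =o cardSuc r" using exact_subset[OF cs] by blast
    have "C'' \<subseteq> F" using C''(1) h by blast
    have GG: "\<forall>C. C \<subseteq> F \<and> |C| =o cardSuc r \<longrightarrow> (\<exists>E. E \<subseteq> C \<and> |E| =o cardSuc r \<and> \<Inter>E \<in> F)"
      using G1 unfolding Gal_def .
    have "\<exists>E. E \<subseteq> C'' \<and> |E| =o cardSuc r \<and> \<Inter>E \<in> F"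
      using GG[rule_format, of C''] \<open>C'' \<subseteq> F\<close> C''(2) by blast
    then obtain E where "E \<subseteq> C''" "|E| =o cardSuc r" "\<Inter>E \<in> F" by blast
    then show "\<exists>E\<subseteq>C'. |E| =o cardSuc r \<and> \<Inter>E \<in> F" using C''(1) by blast
  qed
  have P: "P6 r F" using assms by (rule P6.intro)
  show ?thesis using P6.main_contra[OF P] G by blast
qed

end
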